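(* Let $n\ge1$ and let $f=2x_1\cdots x_n\left(\sum_{i=1}^n b_ix_i+c\right)$ with $b_i\in\{0,1\}$, $c\in\{0,1\}$, and $b_j=1$ for some $j$. Let $K=\{j\mid b_j=1\}$. Then: (i) if $K=\{1,\dots,n\}$, then $f=2t_n$ or $f=2s_n$; (ii) if $1\le|K|<n$, then $2v_n\in C(f)$; (iii) if $1\le|K|<n$ and $|K|$ is even, then $C(f)=C(2v_n)$ or $C(f)=C(2v_n)\vee C(2r_n)$; (iv) if $1\le|K|<n$ and $|K|$ is odd, then $C(f)=C(2u_n)$ or $C(f)=C(2p_n)$.
   Context: All operations are on $\mathbb{Z}_8$; $\vee$ is the join in the lattice of clones on $\mathbb{Z}_8$. For an operation $f$, $C(f)$ denotes the clone generated by $f$ together with binary addition and all unary constant operations. For $n\ge1$: $r_n=x_1\cdots x_n$; $t_n=x_1\cdots x_n(x_1+\dots+x_n)$ if $n$ is even and $t_n=x_1\cdots x_n(x_1+\dots+x_n+1)$ if $n$ is odd; $s_n=x_1\cdots x_n(x_1+\dots+x_n)$ if $n$ is odd and $s_n=x_1\cdots x_n(x_1+\dots+x_n+1)$ if $n$ is even; $p_n=x_1^2x_2\cdots x_n$; $u_n=x_1\cdots x_n(x_1+1)$; for $n\ge2$, $v_n=x_1\cdots x_n(x_1+x_2)$. *)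

theory Defs
  imports Main "HOL-Library.Numeral_Type"
begin

text \<open>An operation of arity n on Z_8 is a pair (n, f) where f :: (nat => 8) => 8
depends only on the arguments 0, ..., n-1 (x_1, ..., x_n of the paper are x 0, ..., x (n-1)).\<close>

type_synonym z8 = "8"
type_synonym op8 = "nat \<times> ((nat \<Rightarrow> z8) \<Rightarrow> z8)"

inductive_set clone_gen :: "op8 set \<Rightarrow> op8 set" for F :: "op8 set" where
  gen: "p \<in> F \<Longrightarrow> p \<in> clone_gen F"
| proj: "i < n \<Longrightarrow> (n, \<lambda>x. x i) \<in> clone_gen F"
| comp: "(m, f) \<in> clone_gen F \<Longrightarrow> (\<forall>i<m. (n, g i) \<in> clone_gen F)
          \<Longrightarrow> (n, \<lambda>x. f (\<lambda>i. g i x)) \<in> clone_gen F"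

definition clone_join :: "op8 set \<Rightarrow> op8 set \<Rightarrow> op8 set" where
  "clone_join A B = clone_gen (A \<union> B)"

definition add_op :: op8 where
  "add_op = (2, \<lambda>x. x 0 + x 1)"

definition const_ops :: "op8 set" where
  "const_ops = {(1, \<lambda>x. c) | c. True}"

definition C :: "op8 \<Rightarrow> op8 set" where
  "C p = clone_gen ({p, add_op} \<union> const_ops)"

definition prodx :: "nat \<Rightarrow> (nat \<Rightarrow> z8) \<Rightarrow> z8" where
  "prodx n x = (\<Prod>i<n. x i)"

definition sumx :: "nat \<Rightarrow> (nat \<Rightarrow> z8) \<Rightarrow> z8" where
  "sumx n x = (\<Sum>i<n. x i)"

definition r_op :: "nat \<Rightarrow> (nat \<Rightarrow> z8) \<Rightarrow> z8" where
  "r_op n x = prodx n x"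

definition t_op :: "nat \<Rightarrow> (nat \<Rightarrow> z8) \<Rightarrow> z8" where
  "t_op n x = (if even n then prodx n x * sumx n x else prodx n x * (sumx n x + 1))"

definition s_op :: "nat \<Rightarrow> (nat \<Rightarrow> z8) \<Rightarrow> z8" where
  "s_op n x = (if odd n then prodx n x * sumx n x else prodx n x * (sumx n x + 1))"

definition p_op :: "nat \<Rightarrow> (nat \<Rightarrow> z8) \<Rightarrow> z8" where
  "p_op n x = (x 0)\<^sup>2 * (\<Prod>i\<in>{1..<n}. x i)"

definition u_op :: "nat \<Rightarrow> (nat \<Rightarrow> z8) \<Rightarrow> z8" where
  "u_op n x = prodx n x * (x 0 + 1)"

definition v_op :: "nat \<Rightarrow> (nat \<Rightarrow> z8) \<Rightarrow> z8" where
  "v_op n x = prodx n x * (x 0 + x 1)"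

definition twice :: "nat \<Rightarrow> ((nat \<Rightarrow> z8) \<Rightarrow> z8) \<Rightarrow> op8" where
  "twice n g = (n, \<lambda>x. 2 * g x)"

end

theory Submission
  imports Defs
begin

lemma cg_cong: "(n, g) \<in> clone_gen F \<Longrightarrow> (\<And>x. g x = h x) \<Longrightarrow> (n, h) \<in> clone_gen F"
proof -
  assume a: "(n, g) \<in> clone_gen F" and e: "\<And>x. g x = h x"
  have "g = h" using e by (rule ext)
  thus ?thesis using a by simp
qed

lemma cg_add:
  assumes F: "add_op \<in> F" and a: "(n, a) \<in> clone_gen F" and b: "(n, b) \<in> clone_gen F"
  shows "(n, \<lambda>x. a x + b x) \<in> clone_gen F"
proof -
  have h: "(2, \<lambda>y. y 0 + y 1) \<in> clone_gen F"
    using F unfolding add_op_def by (rule clone_gen.gen)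
  have "(n, \<lambda>x. (\<lambda>y. y 0 + y 1) (\<lambda>i. (if i = (0::nat) then a else b) x)) \<in> clone_gen F"
  proof (rule clone_gen.comp[OF h], intro allI impI)
    fix i :: nat assume "i < 2"
    then show "(n, if i = 0 then a else b) \<in> clone_gen F" using a b by auto
  qed
  then show ?thesis by simp
qed

lemma cg_const:
  assumes F: "const_ops \<subseteq> F" and n: "1 \<le> n"
  shows "(n, \<lambda>x. c) \<in> clone_gen F"
proof -
  have h: "(1, \<lambda>y. c) \<in> clone_gen F"
    using F unfolding const_ops_def by (auto intro: clone_gen.gen)
  have "(n, \<lambda>x. (\<lambda>y. c) (\<lambda>i. (\<lambda>x. x 0) x)) \<in> clone_gen F"
    by (rule clone_gen.comp[OF h, of n "\<lambda>i x. x 0"]) (use n in \<open>auto intro: clone_gen.proj\<close>)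
  then show ?thesis by simp
qed

lemma cg_perm:
  assumes g: "(n, g) \<in> clone_gen F" and p: "\<forall>i<n. \<pi> i < n"
  shows "(n, \<lambda>x. g (\<lambda>i. x (\<pi> i))) \<in> clone_gen F"
proof -
  have "(n, \<lambda>x. g (\<lambda>i. (\<lambda>x. x (\<pi> i)) x)) \<in> clone_gen F"
    by (rule clone_gen.comp[OF g, of n "\<lambda>i x. x (\<pi> i)"]) (use p in \<open>auto intro: clone_gen.proj\<close>)
  then show ?thesis by simp
qed

lemma cg_scal:
  assumes F: "add_op \<in> F" "const_ops \<subseteq> F" and n: "1 \<le> n" and a: "(n, a) \<in> clone_gen F"
  shows "(n, \<lambda>x. of_nat k * a x) \<in> clone_gen F"
proof (induction k)
  case 0
  then show ?case using cg_const[OF F(2) n, of 0] by simp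
next
  case (Suc k)
  have "(n, \<lambda>x. a x + of_nat k * a x) \<in> clone_gen F"
    by (rule cg_add[OF F(1) a Suc])
  then show ?case by (rule cg_cong) (simp add: algebra_simps)
qed

lemma z8_neg: "of_nat 7 * (a::8) = - a"
proof -
  have "of_nat 7 * a + a = (of_nat 7 + 1) * a" by (simp add: distrib_right)
  also have "(of_nat 7 + 1 :: 8) = 0" by simp
  finally have "of_nat 7 * a + a = 0" by simp
  thus ?thesis by (simp add: eq_neg_iff_add_eq_0)
qed

lemma cg_diff:
  assumes F: "add_op \<in> F" "const_ops \<subseteq> F" and n: "1 \<le> n"
    and a: "(n, a) \<in> clone_gen F" and b: "(n, b) \<in> clone_gen F"
  shows "(n, \<lambda>x. a x - b x) \<in> clone_gen F"
proof -
  have "(n, \<lambda>x. of_nat 7 * b x) \<in> clone_gen F" by (rule cg_scal[OF F n b])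
  then have "(n, \<lambda>x. a x + of_nat 7 * b x) \<in> clone_gen F" by (rule cg_add[OF F(1) a])
  then show ?thesis by (rule cg_cong) (simp only: z8_neg diff_conv_add_uminus)
qed

lemma cg_sub: "G \<subseteq> clone_gen F \<Longrightarrow> clone_gen G \<subseteq> clone_gen F"
proof
  fix p assume G: "G \<subseteq> clone_gen F"
  assume "p \<in> clone_gen G"
  then show "p \<in> clone_gen F"
  proof (induction rule: clone_gen.induct)
    case (gen p) then show ?case using G by auto
  next
    case (proj i n) then show ?case by (rule clone_gen.proj)
  next
    case (comp m f n g) then show ?case by (auto intro: clone_gen.comp)
  qed
qed

lemma C_basic: "add_op \<in> C p" "const_ops \<subseteq> C p" "p \<in> C p"
  unfolding C_def by (auto intro: clone_gen.gen)

lemma C_sub: "p \<in> clone_gen F \<Longrightarrow> add_op \<in> F \<Longrightarrow> const_ops \<subseteq> F \<Longrightarrow> C p \<subseteq> clone_gen F"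
  unfolding C_def by (rule cg_sub) (auto intro: clone_gen.gen)

section \<open>Linear-type operations\<close>

definition linS :: "nat \<Rightarrow> nat set \<Rightarrow> 8 \<Rightarrow> (nat \<Rightarrow> 8) \<Rightarrow> 8" where
  "linS n A c x = 2 * prodx n x * ((\<Sum>i\<in>A. x i) + c)"

definition sw :: "nat \<Rightarrow> nat \<Rightarrow> nat \<Rightarrow> nat" where
  "sw a b i = (if i = a then b else if i = b then a else i)"

lemma sw_sw[simp]: "sw a b (sw a b i) = i" unfolding sw_def by auto

lemma sw_lt: "a < n \<Longrightarrow> b < n \<Longrightarrow> i < n \<Longrightarrow> sw a b i < n" unfolding sw_def by auto

lemma sw_bij: "a < n \<Longrightarrow> b < n \<Longrightarrow> bij_betw (sw a b) {..<n} {..<n}"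
  by (rule bij_betw_byWitness[where f' = "sw a b"]) (auto simp: sw_lt)

lemma sw_inj: "inj_on (sw a b) A"
  by (metis inj_onI sw_sw)

lemma prodx_sw: "a < n \<Longrightarrow> b < n \<Longrightarrow> prodx n (\<lambda>i. x (sw a b i)) = prodx n x"
  unfolding prodx_def using prod.reindex_bij_betw[OF sw_bij, of a n b x] by simp

lemma linS_sw:
  assumes "a < n" "b < n"
  shows "linS n A c (\<lambda>i. x (sw a b i)) = linS n (sw a b ` A) c x"
proof -
  have "(\<Sum>i\<in>sw a b ` A. x i) = (\<Sum>i\<in>A. x (sw a b i))"
    by (simp add: sum.reindex[OF sw_inj])
  then show ?thesis unfolding linS_def using prodx_sw[OF assms] by simp
qed

lemma swap_S:
  assumes "(n, linS n A c) \<in> clone_gen F" "a < n" "b < n"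
  shows "(n, linS n (sw a b ` A) c) \<in> clone_gen F"
proof -
  have "(n, \<lambda>x. linS n A c (\<lambda>i. x (sw a b i))) \<in> clone_gen F"
    by (rule cg_perm[OF assms(1)]) (use assms in \<open>auto simp: sw_lt\<close>)
  then show ?thesis by (rule cg_cong) (simp add: linS_sw assms)
qed

lemma move1:
  assumes "(n, linS n {a} c) \<in> clone_gen F" "a < n" "b < n"
  shows "(n, linS n {b} c) \<in> clone_gen F"
proof -
  have "sw a b ` {a} = {b}" by (simp add: sw_def)
  then show ?thesis using swap_S[OF assms] by simp
qed

lemma move2:
  assumes "(n, linS n {a, b} c) \<in> clone_gen F" "a < n" "b < n" "a \<noteq> b"
    "a' < n" "b' < n" "a' \<noteq> b'"
  shows "(n, linS n {a', b'} c) \<in> clone_gen F"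
proof -
  define b1 where "b1 = sw a a' b"
  have b1: "b1 < n" "b1 \<noteq> a'" using assms unfolding b1_def sw_def by auto
  have "sw a a' ` {a, b} = {a', b1}" unfolding b1_def by (simp add: sw_def)
  then have s1: "(n, linS n {a', b1} c) \<in> clone_gen F" using swap_S[OF assms(1,2,5)] by simp
  have "sw b1 b' ` {a', b1} = {a', b'}" using b1 assms by (auto simp: sw_def)
  then show ?thesis using swap_S[OF s1 b1(1) assms(6)] by simp
qed

lemma linS_union:
  assumes "A \<inter> B = {}" "finite A" "finite B"
  shows "linS n A c x + linS n B d x = linS n (A \<union> B) (c + d) x"
  unfolding linS_def using assms by (simp add: sum.union_disjoint algebra_simps)

context
  fixes F assumes F: "add_op \<in> F" "const_ops \<subseteq> F"
begin

lemma S_union: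
  assumes "(n, linS n A c) \<in> clone_gen F" "(n, linS n B d) \<in> clone_gen F"
    "A \<inter> B = {}" "finite A" "finite B"
  shows "(n, linS n (A \<union> B) (c + d)) \<in> clone_gen F"
  using cg_add[OF F(1) assms(1,2)] by (rule cg_cong) (simp add: linS_union assms)

lemma S_diff:
  assumes n: "1 \<le> n" and "(n, linS n (A \<union> B) (c + d)) \<in> clone_gen F" "(n, linS n B d) \<in> clone_gen F"
    "A \<inter> B = {}" "finite A" "finite B"
  shows "(n, linS n A c) \<in> clone_gen F"
  using cg_diff[OF F n assms(2,3)] by (rule cg_cong) (simp add: linS_union[symmetric] assms)

lemma S_empty0: assumes n: "1 \<le> n" shows "(n, linS n {} 0) \<in> clone_gen F"
proof -
  have "(n, \<lambda>x. 0) \<in> clone_gen F" by (rule cg_const[OF F(2) n])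
  then show ?thesis by (rule cg_cong) (simp add: linS_def)
qed

lemma S_even:
  assumes n: "1 \<le> n" and v: "(n, linS n {0, 1} 0) \<in> clone_gen F" and n2: "2 \<le> n"
  shows "A \<subseteq> {..<n} \<Longrightarrow> card A = 2 * k \<Longrightarrow> (n, linS n A 0) \<in> clone_gen F"
proof (induction k arbitrary: A)
  case 0
  then have "A = {}" using finite_subset[of A "{..<n}"] by auto
  then show ?case using S_empty0[OF n] by simp
next
  case (Suc k)
  have fin: "finite A" using Suc.prems finite_subset by blast
  obtain a where a: "a \<in> A" using Suc.prems by fastforce
  have "card (A - {a}) = 2 * k + 1" using Suc.prems a fin by simp
  then have "A - {a} \<noteq> {}" by (metis card.empty add_is_0 one_neq_zero)
  then obtain b where b: "b \<in> A - {a}" by blast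
  define A' where "A' = A - {a, b}"
  have cA': "card A' = 2 * k" using Suc.prems a b fin unfolding A'_def
    by (simp add: card_Diff_subset)
  have A'sub: "A' \<subseteq> {..<n}" using Suc.prems unfolding A'_def by auto
  have h1: "(n, linS n A' 0) \<in> clone_gen F" by (rule Suc.IH[OF A'sub cA'])
  have h2: "(n, linS n {a, b} 0) \<in> clone_gen F"
    by (rule move2[OF v]) (use a b Suc.prems n2 in auto)
  have "(n, linS n ({a, b} \<union> A') (0 + 0)) \<in> clone_gen F"
    by (rule S_union[OF h2 h1]) (use fin in \<open>auto simp: A'_def\<close>)
  moreover have "{a, b} \<union> A' = A" using a b unfolding A'_def by auto
  ultimately show ?case by simp
qed

lemma KEY:
  assumes n: "1 \<le> n" and S: "(n, linS n A c) \<in> clone_gen F"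
    and A: "finite A" and j: "j \<in> A" "j < n" and l: "l < n" "l \<notin> A"
  shows "(n, linS n {j, l} 0) \<in> clone_gen F"
proof -
  have jl: "j \<noteq> l" using j l by auto
  have g1: "(n, \<lambda>x. linS n A c (\<lambda>i. x (sw j l i))) \<in> clone_gen F"
    by (rule cg_perm[OF S]) (use j l in \<open>auto simp: sw_lt\<close>)
  have g2: "(n, \<lambda>x. linS n A c x - linS n A c (\<lambda>i. x (sw j l i))) \<in> clone_gen F"
    by (rule cg_diff[OF F n S g1])
  have eq2: "linS n A c y - linS n A c (\<lambda>i. y (sw j l i)) = 2 * prodx n y * (y j - y l)" for y
  proof -
    have s1: "(\<Sum>i\<in>A. y i) = y j + (\<Sum>i\<in>A - {j}. y i)" using A j by (simp add: sum.remove)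
    have s2: "(\<Sum>i\<in>A. y (sw j l i)) = y (sw j l j) + (\<Sum>i\<in>A - {j}. y (sw j l i))"
      using A j by (simp add: sum.remove)
    have s3: "(\<Sum>i\<in>A - {j}. y (sw j l i)) = (\<Sum>i\<in>A - {j}. y i)"
      by (rule sum.cong) (use l in \<open>auto simp: sw_def\<close>)
    have "sw j l j = l" by (simp add: sw_def)
    then show ?thesis unfolding linS_def using prodx_sw[OF j(2) l(1), of y] s1 s2 s3
      by (simp add: algebra_simps)
  qed
  define G where "G = (\<lambda>i. if i = j then (\<lambda>x::nat\<Rightarrow>8. x j + x l) else (\<lambda>x. x i))"
  have "(n, \<lambda>x. (\<lambda>y. linS n A c y - linS n A c (\<lambda>i. y (sw j l i))) (\<lambda>i. G i x)) \<in> clone_gen F"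
  proof (rule clone_gen.comp[OF g2], intro allI impI)
    fix i assume "i < n"
    then show "(n, G i) \<in> clone_gen F" unfolding G_def
      using cg_add[OF F(1) clone_gen.proj[OF j(2)] clone_gen.proj[OF l(1)]]
      by (auto intro: clone_gen.proj)
  qed
  then show ?thesis
  proof (rule cg_cong)
    fix x :: "nat \<Rightarrow> 8"
    let ?y = "\<lambda>i. G i x"
    have yj: "?y j = x j + x l" and yl: "?y l = x l" using jl by (auto simp: G_def)
    have fin: "finite {..<n}" by simp
    have pr1: "prodx n ?y = ?y j * (\<Prod>i\<in>{..<n} - {j}. ?y i)"
      unfolding prodx_def using j by (simp add: prod.remove)
    have pr2: "prodx n x = x j * (\<Prod>i\<in>{..<n} - {j}. x i)"
      unfolding prodx_def using j by (simp add: prod.remove)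
    have pr3: "(\<Prod>i\<in>{..<n} - {j}. ?y i) = (\<Prod>i\<in>{..<n} - {j}. x i)"
      by (rule prod.cong) (auto simp: G_def)
    have "linS n A c ?y - linS n A c (\<lambda>i. ?y (sw j l i)) = 2 * prodx n ?y * (?y j - ?y l)"
      by (rule eq2)
    also have "\<dots> = linS n {j, l} 0 x"
      unfolding linS_def using pr1 pr2 pr3 yj yl jl by (simp add: algebra_simps)
    finally show "linS n A c ?y - linS n A c (\<lambda>i. ?y (sw j l i)) = linS n {j, l} 0 x" .
  qed
qed

lemma V_of:
  assumes n: "1 \<le> n" and S: "(n, linS n K c) \<in> clone_gen F"
    and K: "K \<subseteq> {..<n}" "1 \<le> card K" "card K < n"
  shows "(n, linS n {0, 1} 0) \<in> clone_gen F"
proof -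
  have fin: "finite K" using K finite_subset by blast
  obtain j where j: "j \<in> K" using K by fastforce
  have "K \<noteq> {..<n}" using K by auto
  then obtain l where l: "l < n" "l \<notin> K" using K by auto
  have h: "(n, linS n {j, l} 0) \<in> clone_gen F"
    by (rule KEY[OF n S fin j]) (use j K l in auto)
  show ?thesis by (rule move2[OF h]) (use j K l in auto)
qed

lemma linS_split: "finite K \<Longrightarrow> a \<in> K \<Longrightarrow> linS n K c x = linS n {a} c x + linS n (K - {a}) 0 x"
  by (subst linS_union) (auto simp: insert_absorb)

lemma odd_build:
  assumes n: "2 \<le> n" and S: "(n, linS n {0} c) \<in> clone_gen F"
    and K: "K \<subseteq> {..<n}" "a \<in> K" "even (card (K - {a}))"
  shows "(n, linS n K c) \<in> clone_gen F"
proof -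
  have fin: "finite K" using K finite_subset by blast
  have V: "(n, linS n {0, 1} 0) \<in> clone_gen F"
    by (rule KEY[OF _ S]) (use n in auto)
  from K(3) obtain k where k: "card (K - {a}) = 2 * k" by (rule evenE)
  have h1: "(n, linS n (K - {a}) 0) \<in> clone_gen F"
    by (rule S_even[OF _ V n _ k]) (use n K in auto)
  have h2: "(n, linS n {a} c) \<in> clone_gen F"
    by (rule move1[OF S]) (use n K in auto)
  show ?thesis using cg_add[OF F(1) h2 h1] by (rule cg_cong) (simp add: linS_split[OF fin K(2)])
qed

lemma odd_extract:
  assumes n: "1 \<le> n" and S: "(n, linS n K c) \<in> clone_gen F"
    and K: "K \<subseteq> {..<n}" "1 \<le> card K" "card K < n" "a \<in> K" "even (card (K - {a}))"
  shows "(n, linS n {0} c) \<in> clone_gen F"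
proof -
  have fin: "finite K" using K finite_subset by blast
  have V: "(n, linS n {0, 1} 0) \<in> clone_gen F" by (rule V_of[OF n S K(1-3)])
  from K(5) obtain k where k: "card (K - {a}) = 2 * k" by (rule evenE)
  have h1: "(n, linS n (K - {a}) 0) \<in> clone_gen F"
    by (rule S_even[OF n V _ _ k]) (use n K in auto)
  have "(n, linS n {a} c) \<in> clone_gen F"
    using cg_diff[OF F n S h1] by (rule cg_cong) (simp add: linS_split[OF fin K(4)])
  then show ?thesis by (rule move1) (use n K in auto)
qed

end

lemma CF: "add_op \<in> {p, add_op} \<union> const_ops" "const_ops \<subseteq> {p, add_op} \<union> const_ops" by auto

lemmas C_KEY = KEY[OF CF, folded C_def]
lemmas C_V_of = V_of[OF CF, folded C_def]
lemmas C_even = S_even[OF CF, folded C_def]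
lemmas C_odd_build = odd_build[OF CF, folded C_def]
lemmas C_odd_extract = odd_extract[OF CF, folded C_def]
lemmas C_diff = cg_diff[OF CF, folded C_def]

lemma C_cong: "(n, g) \<in> C p \<Longrightarrow> (\<And>x. g x = h x) \<Longrightarrow> (n, h) \<in> C p"
  unfolding C_def by (rule cg_cong)

lemma C_sub': "p \<in> C q \<Longrightarrow> C p \<subseteq> C q"
  using C_sub[of p "{q, add_op} \<union> const_ops"] unfolding C_def by auto

lemma C_eq: "p \<in> C q \<Longrightarrow> q \<in> C p \<Longrightarrow> C p = C q"
  using C_sub' by blast

theorem theorem4p2:
  fixes n :: nat and b :: "nat \<Rightarrow> z8" and c :: z8 and f :: "(nat \<Rightarrow> z8) \<Rightarrow> z8"
    and K :: "nat set"
  assumes n: "n \<ge> 1"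
    and b01: "\<forall>i<n. b i \<in> {0, 1}"
    and c01: "c \<in> {0, 1}"
    and bj: "\<exists>j<n. b j = 1"
    and f_def: "f = (\<lambda>x. 2 * prodx n x * ((\<Sum>i<n. b i * x i) + c))"
    and K_def: "K = {j. j < n \<and> b j = 1}"
  shows "(K = {..<n} \<longrightarrow> (n, f) = twice n (t_op n) \<or> (n, f) = twice n (s_op n))
    \<and> (1 \<le> card K \<and> card K < n \<longrightarrow> twice n (v_op n) \<in> C (n, f))
    \<and> (1 \<le> card K \<and> card K < n \<and> even (card K) \<longrightarrow>
         C (n, f) = C (twice n (v_op n))
         \<or> C (n, f) = clone_join (C (twice n (v_op n))) (C (twice n (r_op n))))
    \<and> (1 \<le> card K \<and> card K < n \<and> odd (card K) \<longrightarrow>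
         C (n, f) = C (twice n (u_op n)) \<or> C (n, f) = C (twice n (p_op n)))"
proof -
  have Ksub: "K \<subseteq> {..<n}" unfolding K_def by auto
  have Kfin: "finite K" using Ksub finite_subset by blast
  have sb: "(\<Sum>i<n. b i * x i) = (\<Sum>i\<in>K. x i)" for x
  proof -
    have "(\<Sum>i<n. b i * x i) = (\<Sum>i<n. if i \<in> K then x i else 0)"
      by (rule sum.cong) (use b01 in \<open>auto simp: K_def\<close>)
    also have "\<dots> = sum x ({..<n} \<inter> K)" by (simp add: sum.inter_restrict)
    also have "{..<n} \<inter> K = K" using Ksub by auto
    finally show ?thesis .
  qed
  have fK: "f = linS n K c" unfolding f_def linS_def by (rule ext) (simp add: sb)
  have Cf: "(n, linS n K c) \<in> C (n, f)" using C_basic(3)[of "(n, f)"] fK by simp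
  have tv: "n \<ge> 2 \<Longrightarrow> twice n (v_op n) = (n, linS n {0, 1} 0)"
    unfolding twice_def v_op_def linS_def by (auto intro!: ext simp: algebra_simps)
  have tr: "twice n (r_op n) = (n, linS n {} 1)"
    unfolding twice_def r_op_def linS_def by (auto intro!: ext simp: algebra_simps)
  have tu: "twice n (u_op n) = (n, linS n {0} 1)"
    unfolding twice_def u_op_def linS_def by (auto intro!: ext simp: algebra_simps)
  have tp: "twice n (p_op n) = (n, linS n {0} 0)"
  proof -
    have U: "{..<n} = insert 0 {1..<n}" using n by auto
    have "(x 0)\<^sup>2 * (\<Prod>i\<in>{1..<n}. x i) = prodx n x * x 0" for x :: "nat \<Rightarrow> 8"
      unfolding prodx_def U by (simp add: power2_eq_square algebra_simps)
    then show ?thesis unfolding twice_def p_op_def linS_def by (auto intro!: ext)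
  qed
  have part1: "K = {..<n} \<longrightarrow> (n, f) = twice n (t_op n) \<or> (n, f) = twice n (s_op n)"
  proof
    assume KK: "K = {..<n}"
    have ff: "f = (\<lambda>x. 2 * (prodx n x * (sumx n x + c)))"
      unfolding fK KK linS_def sumx_def by (auto intro!: ext)
    show "(n, f) = twice n (t_op n) \<or> (n, f) = twice n (s_op n)"
      using c01 unfolding ff twice_def t_op_def s_op_def by (cases "even n") auto
  qed
  have rest: "1 \<le> card K \<and> card K < n \<longrightarrow> twice n (v_op n) \<in> C (n, f)
    \<and> (even (card K) \<longrightarrow> C (n, f) = C (twice n (v_op n))
         \<or> C (n, f) = clone_join (C (twice n (v_op n))) (C (twice n (r_op n))))
    \<and> (odd (card K) \<longrightarrow> C (n, f) = C (twice n (u_op n)) \<or> C (n, f) = C (twice n (p_op n)))"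
  proof (rule impI, intro conjI)
    assume cK: "1 \<le> card K \<and> card K < n"
    have n2: "2 \<le> n" using cK by auto
    have V: "(n, linS n {0, 1} 0) \<in> C (n, f)" by (rule C_V_of[OF n Cf Ksub]) (use cK in auto)
    show ii: "twice n (v_op n) \<in> C (n, f)" using V tv[OF n2] by simp
    show "even (card K) \<longrightarrow> C (n, f) = C (twice n (v_op n))
         \<or> C (n, f) = clone_join (C (twice n (v_op n))) (C (twice n (r_op n)))"
    proof
      assume ev: "even (card K)"
      from ev obtain k where k: "card K = 2 * k" by (rule evenE)
      have K0f: "(n, linS n K 0) \<in> C (n, f)" by (rule C_even[OF n V n2 Ksub k])
      have vv: "(n, linS n {0, 1} 0) \<in> C (twice n (v_op n))"
        using C_basic(3)[of "twice n (v_op n)"] tv[OF n2] by simp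
      have K0v: "(n, linS n K 0) \<in> C (twice n (v_op n))" by (rule C_even[OF n vv n2 Ksub k])
      show "C (n, f) = C (twice n (v_op n))
         \<or> C (n, f) = clone_join (C (twice n (v_op n))) (C (twice n (r_op n)))"
      proof (cases "c = 0")
        case True
        have "C (n, f) = C (twice n (v_op n))"
          by (rule C_eq) (use K0v True fK ii in auto)
        then show ?thesis by simp
      next
        case False
        then have c1: "c = 1" using c01 by auto
        define J where "J = C (twice n (v_op n)) \<union> C (twice n (r_op n))"
        have JF: "add_op \<in> J" "const_ops \<subseteq> J" unfolding J_def
          using C_basic(1,2)[of "twice n (v_op n)"] by auto
        have r_in: "twice n (r_op n) \<in> C (n, f)"
        proof -
          have "(n, \<lambda>x. linS n K c x - linS n K 0 x) \<in> C (n, f)" by (rule C_diff[OF n Cf K0f])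
          then have "(n, linS n {} 1) \<in> C (n, f)"
            by (rule C_cong) (simp add: linS_def c1 algebra_simps)
          then show ?thesis using tr by simp
        qed
        have "clone_join (C (twice n (v_op n))) (C (twice n (r_op n))) \<subseteq> C (n, f)"
          unfolding clone_join_def C_def[of "(n, f)"]
          by (rule cg_sub) (use C_sub'[OF ii] C_sub'[OF r_in] in \<open>auto simp: C_def\<close>)
        moreover have "C (n, f) \<subseteq> clone_join (C (twice n (v_op n))) (C (twice n (r_op n)))"
        proof -
          have a1: "(n, linS n K 0) \<in> clone_gen J" using K0v unfolding J_def by (auto intro: clone_gen.gen)
          have a2: "(n, linS n {} 1) \<in> clone_gen J" using C_basic(3)[of "twice n (r_op n)"] tr
            unfolding J_def by (auto intro: clone_gen.gen)
          have "(n, f) \<in> clone_gen J"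
            using cg_add[OF JF(1) a1 a2] by (rule cg_cong) (simp add: fK linS_def c1 algebra_simps)
          then show ?thesis unfolding clone_join_def J_def[symmetric]
            by (rule C_sub) (use JF in auto)
        qed
        ultimately show ?thesis by blast
      qed
    qed
    show "odd (card K) \<longrightarrow> C (n, f) = C (twice n (u_op n)) \<or> C (n, f) = C (twice n (p_op n))"
    proof
      assume od: "odd (card K)"
      obtain a where a: "a \<in> K" using cK by fastforce
      have ev: "even (card (K - {a}))" using od a Kfin cK by auto
      have E1: "(n, linS n {0} c) \<in> C (n, f)"
        by (rule C_odd_extract[OF n Cf Ksub _ _ a ev]) (use cK in auto)
      have base: "(n, linS n {0} c) \<in> C (n, linS n {0} c)" by (rule C_basic(3))
      have E2: "(n, f) \<in> C (n, linS n {0} c)"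
        using C_odd_build[OF n2 base Ksub a ev] fK by simp
      have eq: "C (n, f) = C (n, linS n {0} c)" by (rule C_eq[OF E2 E1])
      show "C (n, f) = C (twice n (u_op n)) \<or> C (n, f) = C (twice n (p_op n))"
        using c01 eq tu tp by auto
    qed
  qed
  show ?thesis using part1 rest by blast
qed

end
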